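(* Let $f,g:[0,\infty)\to[0,\infty)$, let $0<a<b<\infty$, and suppose $fg$ is Lebesgue integrable on $[a,b]$. Let $q>1$ and $(\alpha_1,m_1),(\alpha_2,m_2)\in(0,1]^2$. Suppose $f^q$ is $(\alpha_1,m_1)$-GA-convex on $[0,\max\{a^{1/m_1},b\}]$ and $g^{q/(q-1)}$ is $(\alpha_2,m_2)$-GA-convex on $[0,\max\{a^{1/m_2},b\}]$. Then \begin{multline*} \int_a^b f(x)g(x)\,dx\le(\ln b-\ln a)\Bigl\{m_1f^q(a^{1/m_1})L(a,b)+G(\alpha_1,1)\bigl[f^q(b)-m_1f^q(a^{1/m_1})\bigr]\Bigr\}^{1/q}\\ \times\Bigl\{m_2g^{q/(q-1)}(a^{1/m_2})L(a,b)+G(\alpha_2,1)\bigl[g^{q/(q-1)}(b)-m_2g^{q/(q-1)}(a^{1/m_2})\bigr]\Bigr\}^{1-1/q}. \end{multline*}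
   Context: For $c>0$, $h:[0,c]\to\mathbb{R}$ and $(\alpha,m)\in(0,1]^2$, $h$ is called $(\alpha,m)$-GA-convex on $[0,c]$ if $h\bigl(x^\lambda y^{m(1-\lambda)}\bigr)\le\lambda^\alpha h(x)+m(1-\lambda^\alpha)h(y)$ for all $x,y\in[0,c]$ and all $\lambda\in[0,1]$ (with the convention $0^0=1$). For fixed $0<a<b$ and $\ell\ge0$, $\alpha>0$, set $G(\alpha,\ell)=\int_0^1 t^\alpha a^{\ell(1-t)}b^{\ell t}\,dt$. For $x,y>0$, $x\neq y$, the logarithmic mean is $L(x,y)=\frac{y-x}{\ln y-\ln x}$. *)

theory Defs
  imports "HOL-Analysis.Analysis"
begin

text \<open>Real power with the convention 0^0 = 1 (Isabelle's powr has 0 powr 0 = 0).\<close>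
definition rpow :: "real \<Rightarrow> real \<Rightarrow> real" where
  "rpow x t = (if t = 0 then 1 else x powr t)"

definition GA_convex :: "real \<Rightarrow> real \<Rightarrow> real \<Rightarrow> (real \<Rightarrow> real) \<Rightarrow> bool" where
  "GA_convex \<alpha> m c h \<longleftrightarrow>
     (\<forall>x\<in>{0..c}. \<forall>y\<in>{0..c}. \<forall>t\<in>{0..1}.
        h (rpow x t * rpow y (m * (1 - t)))
          \<le> rpow t \<alpha> * h x + m * (1 - rpow t \<alpha>) * h y)"

definition Gfun :: "real \<Rightarrow> real \<Rightarrow> real \<Rightarrow> real \<Rightarrow> real" where
  "Gfun a b \<alpha> l = integral {0..1} (\<lambda>t. rpow t \<alpha> * rpow a (l * (1 - t)) * rpow b (l * t))"

definition logmean :: "real \<Rightarrow> real \<Rightarrow> real" where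
  "logmean x y = (y - x) / (ln y - ln x)"

end

theory Submission
  imports Defs
begin


lemma young0:
  fixes x y th :: real
  assumes "0 \<le> th" "th \<le> 1" "x \<ge> 0" "y \<ge> 0"
  shows "x powr th * y powr (1 - th) \<le> th * x + (1 - th) * y"
proof (cases "x = 0 \<or> y = 0")
  case True then show ?thesis using assms by auto
next
  case False then show ?thesis using Youngs_inequality_0[of th "1 - th" x y] assms by auto
qed

lemma holder_aux:
  fixes H1 H2 :: "real \<Rightarrow> real" and a b th :: real
  assumes ab: "a \<le> b" and th: "0 < th" "th < 1"
    and c1: "continuous_on {a..b} H1" and c2: "continuous_on {a..b} H2"
    and n1: "\<And>x. x \<in> {a..b} \<Longrightarrow> H1 x \<ge> 0" and n2: "\<And>x. x \<in> {a..b} \<Longrightarrow> H2 x \<ge> 0"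
    and d: "d > 0"
  shows "integral {a..b} (\<lambda>x. H1 x powr th * H2 x powr (1 - th))
     \<le> (integral {a..b} H1 + d) powr th * (integral {a..b} H2 + d) powr (1 - th)"
proof -
  define I where "I = integral {a..b} H1 + d"
  define J where "J = integral {a..b} H2 + d"
  have i1: "H1 integrable_on {a..b}" using c1 integrable_continuous_interval by blast
  have i2: "H2 integrable_on {a..b}" using c2 integrable_continuous_interval by blast
  have I0: "integral {a..b} H1 \<ge> 0" using integral_nonneg[OF i1] n1 by blast
  have J0: "integral {a..b} H2 \<ge> 0" using integral_nonneg[OF i2] n2 by blast
  have Ip: "I > 0" "J > 0" using I0 J0 d by (auto simp: I_def J_def)
  define K where "K = I powr th * J powr (1 - th)"
  have Kp: "K > 0" using Ip by (simp add: K_def)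
  have cP: "continuous_on {a..b} (\<lambda>x. H1 x powr th * H2 x powr (1 - th))"
    by (intro continuous_intros continuous_on_powr' c1 c2) (use n1 n2 th in auto)
  have pw: "H1 x powr th * H2 x powr (1 - th) / K \<le> th * (H1 x / I) + (1 - th) * (H2 x / J)"
    if x: "x \<in> {a..b}" for x
  proof -
    have "H1 x powr th * H2 x powr (1 - th) / K = (H1 x / I) powr th * (H2 x / J) powr (1 - th)"
      using Ip n1[OF x] n2[OF x] by (simp add: K_def powr_divide)
    also have "\<dots> \<le> th * (H1 x / I) + (1 - th) * (H2 x / J)"
      by (rule young0) (use th Ip n1[OF x] n2[OF x] in auto)
    finally show ?thesis .
  qed
  have "integral {a..b} (\<lambda>x. H1 x powr th * H2 x powr (1 - th) / K)
     \<le> integral {a..b} (\<lambda>x. th * (H1 x / I) + (1 - th) * (H2 x / J))"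
    using pw Kp Ip by (intro integral_le integrable_continuous_interval continuous_intros cP c1 c2) auto
  also have "\<dots> = th * (integral {a..b} H1 / I) + (1 - th) * (integral {a..b} H2 / J)"
    by (subst integral_add) (use Ip in \<open>auto intro!: integrable_continuous_interval continuous_intros c1 c2\<close>)
  also have "\<dots> \<le> th * 1 + (1 - th) * 1"
    using th Ip I0 J0 d by (intro add_mono mult_left_mono) (auto simp: I_def J_def)
  finally have "integral {a..b} (\<lambda>x. H1 x powr th * H2 x powr (1 - th)) / K \<le> 1" by simp
  then show ?thesis using Kp by (simp add: K_def I_def J_def divide_le_eq)
qed

lemma holder:
  fixes H1 H2 :: "real \<Rightarrow> real" and a b th :: real
  assumes ab: "a \<le> b" and th: "0 < th" "th < 1"
    and c1: "continuous_on {a..b} H1" and c2: "continuous_on {a..b} H2"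
    and n1: "\<And>x. x \<in> {a..b} \<Longrightarrow> H1 x \<ge> 0" and n2: "\<And>x. x \<in> {a..b} \<Longrightarrow> H2 x \<ge> 0"
  shows "integral {a..b} (\<lambda>x. H1 x powr th * H2 x powr (1 - th))
     \<le> (integral {a..b} H1) powr th * (integral {a..b} H2) powr (1 - th)"
proof -
  have i1: "H1 integrable_on {a..b}" using c1 integrable_continuous_interval by blast
  have i2: "H2 integrable_on {a..b}" using c2 integrable_continuous_interval by blast
  have I0: "integral {a..b} H1 \<ge> 0" using integral_nonneg[OF i1] n1 by blast
  have J0: "integral {a..b} H2 \<ge> 0" using integral_nonneg[OF i2] n2 by blast
  show ?thesis
  proof (rule tendsto_le[of "at_right 0"])
    have lim: "((\<lambda>d. (integral {a..b} H1 + d) powr th * (integral {a..b} H2 + d) powr (1 - th)) \<longlongrightarrow>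
      (integral {a..b} H1 + 0) powr th * (integral {a..b} H2 + 0) powr (1 - th)) (at_right 0)"
    proof (rule tendsto_mult; rule tendsto_powr')
      show "((\<lambda>d. integral {a..b} H1 + d) \<longlongrightarrow> integral {a..b} H1 + 0) (at_right 0)"
        by (intro tendsto_intros)
      show "((\<lambda>d. integral {a..b} H2 + d) \<longlongrightarrow> integral {a..b} H2 + 0) (at_right 0)"
        by (intro tendsto_intros)
    next
      show "integral {a..b} H1 + 0 \<noteq> 0 \<or> 0 < th \<and> (\<forall>\<^sub>F x in at_right 0. 0 \<le> integral {a..b} H1 + x)"
        using th I0 by (auto simp: eventually_at_right_field intro!: exI[of _ 1])
      show "integral {a..b} H2 + 0 \<noteq> 0 \<or> 0 < 1 - th \<and> (\<forall>\<^sub>F x in at_right 0. 0 \<le> integral {a..b} H2 + x)"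
        using th J0 by (auto simp: eventually_at_right_field intro!: exI[of _ 1])
    qed simp_all
    then show "((\<lambda>d. (integral {a..b} H1 + d) powr th * (integral {a..b} H2 + d) powr (1 - th)) \<longlongrightarrow>
      (integral {a..b} H1) powr th * (integral {a..b} H2) powr (1 - th)) (at_right 0)" by simp
    show "eventually (\<lambda>d. integral {a..b} (\<lambda>x. H1 x powr th * H2 x powr (1 - th))
     \<le> (integral {a..b} H1 + d) powr th * (integral {a..b} H2 + d) powr (1 - th)) (at_right 0)"
      using holder_aux[OF assms] by (auto simp: eventually_at_right_field intro!: exI[of _ 1])
  qed auto
qed



lemma gsub:
  fixes a b al :: real
  assumes ab: "0 < a" "a < b" and al: "al > 0"
  shows "integral {a..b} (\<lambda>x. ((ln x - ln a) / (ln b - ln a)) powr al) = (ln b - ln a) * Gfun a b al 1"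
proof -
  define L where "L = ln b - ln a"
  have L: "L > 0" using ab by (simp add: L_def)
  define g where "g t = a * exp (t * L)" for t
  define f where "f x = ((ln x - ln a) / L) powr al" for x
  have g0: "g 0 = a" and g1: "g 1 = b" using ab by (auto simp: g_def L_def exp_diff)
  have gmono: "g ` {0..1} \<subseteq> {a..b}"
  proof
    fix y assume "y \<in> g ` {0..1}"
    then obtain t where t: "t \<in> {0..1}" "y = g t" by auto
    have "exp (0 * L) \<le> exp (t * L)" "exp (t * L) \<le> exp (1 * L)"
      using t L by (auto intro: mult_right_mono)
    then show "y \<in> {a..b}" using t ab g0 g1 unfolding g_def by auto
  qed
  have cf: "continuous_on {a..b} f"
    unfolding f_def using ab L al
    by (intro continuous_on_powr' continuous_intros) (auto simp: divide_simps)
  have der: "(g has_field_derivative (g t * L)) (at t within {0..1})" for t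
    unfolding g_def by (auto intro!: derivative_eq_intros)
  have "((\<lambda>t. (g t * L) *\<^sub>R f (g t)) has_integral integral {g 0..g 1} f) {0..1}"
    by (rule has_integral_substitution[OF _ _ gmono cf der]) (use g0 g1 ab in auto)
  then have hi: "((\<lambda>t. (g t * L) *\<^sub>R f (g t)) has_integral integral {a..b} f) {0..1}"
    using g0 g1 by simp
  have eq: "(g t * L) *\<^sub>R f (g t) = L * (rpow t al * rpow a (1 * (1 - t)) * rpow b (1 * t))"
    if t: "t \<in> {0..1}" for t
  proof -
    have "ln (g t) = ln a + t * L" using ab by (simp add: g_def ln_mult)
    then have fg: "f (g t) = t powr al" using L by (simp add: f_def)
    have "rpow a (1 * (1 - t)) * rpow b (1 * t) = a powr (1 - t) * b powr t"
      using ab by (simp add: rpow_def)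
    also have "\<dots> = exp (ln a + t * L)" using ab
      by (simp add: powr_def L_def exp_add[symmetric] algebra_simps)
    also have "\<dots> = g t" using ab by (simp add: g_def exp_add)
    finally have "rpow a (1 * (1 - t)) * rpow b (1 * t) = g t" .
    moreover have "rpow t al = t powr al" using al by (simp add: rpow_def)
    ultimately show ?thesis using fg by simp
  qed
  have "integral {0..1} (\<lambda>t. L * (rpow t al * rpow a (1 * (1 - t)) * rpow b (1 * t))) = integral {a..b} f"
  proof -
    have "integral {0..1} (\<lambda>t. (g t * L) *\<^sub>R f (g t)) = integral {0..1} (\<lambda>t. L * (rpow t al * rpow a (1 * (1 - t)) * rpow b (1 * t)))"
      by (rule integral_cong) (rule eq)
    then show ?thesis using integral_unique[OF hi] by simp
  qed
  then show ?thesis by (simp add: Gfun_def f_def[abs_def] L_def)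
qed



lemma rpow_pos: "y > 0 \<Longrightarrow> rpow y s = y powr s"
  by (simp add: rpow_def)

lemma conv_pt:
  fixes h :: "real \<Rightarrow> real" and a b al m x :: real
  assumes cv: "GA_convex al m (max (a powr (1 / m)) b) h"
    and ab: "0 < a" "a < b" and al: "al > 0" and m: "0 < m" "m \<le> 1" and x: "x \<in> {a..b}"
  shows "h x \<le> m * h (a powr (1 / m)) + ((ln x - ln a) / (ln b - ln a)) powr al * (h b - m * h (a powr (1 / m)))"
proof -
  define L where "L = ln b - ln a"
  have L: "L > 0" using ab by (simp add: L_def)
  define t where "t = (ln x - ln a) / L"
  have t: "t \<in> {0..1}" using x ab L by (auto simp: t_def L_def divide_simps)
  have bc: "b \<in> {0..max (a powr (1 / m)) b}" using ab by auto
  have ac: "a powr (1 / m) \<in> {0..max (a powr (1 / m)) b}" by auto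
  have "rpow b t * rpow (a powr (1 / m)) (m * (1 - t)) = b powr t * a powr (1 - t)"
    using ab m by (simp add: rpow_pos powr_powr)
  also have "\<dots> = exp (ln a + t * L)"
    using ab by (simp add: powr_def L_def exp_add[symmetric] algebra_simps)
  also have "\<dots> = x" using L x ab by (simp add: t_def)
  finally have xe: "rpow b t * rpow (a powr (1 / m)) (m * (1 - t)) = x" .
  have "h x \<le> rpow t al * h b + m * (1 - rpow t al) * h (a powr (1 / m))"
    using cv bc ac t unfolding GA_convex_def xe[symmetric] by blast
  also have "\<dots> = m * h (a powr (1 / m)) + t powr al * (h b - m * h (a powr (1 / m)))"
    using al by (simp add: rpow_def algebra_simps)
  finally show ?thesis by (simp add: t_def L_def)
qed

lemma root_le:
  fixes y H q :: real
  assumes "y \<ge> 0" "q > 0" "y powr q \<le> H"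
  shows "y \<le> H powr (1 / q)"
proof -
  have "y = (y powr q) powr (1 / q)" using assms by (simp add: powr_powr)
  also have "\<dots> \<le> H powr (1 / q)" using assms by (intro powr_mono2) auto
  finally show ?thesis .
qed

lemma int_lin:
  fixes a b al C D :: real
  assumes ab: "0 < a" "a < b" and al: "al > 0"
  shows "integral {a..b} (\<lambda>x. C + ((ln x - ln a) / (ln b - ln a)) powr al * D)
     = (ln b - ln a) * (C * logmean a b + Gfun a b al 1 * D)"
proof -
  have L: "ln b - ln a > 0" using ab by simp
  have c: "continuous_on {a..b} (\<lambda>x. ((ln x - ln a) / (ln b - ln a)) powr al)"
    using ab L al by (intro continuous_on_powr' continuous_intros) (auto simp: divide_simps)
  have "integral {a..b} (\<lambda>x. C + ((ln x - ln a) / (ln b - ln a)) powr al * D)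
     = integral {a..b} (\<lambda>x. C) + integral {a..b} (\<lambda>x. ((ln x - ln a) / (ln b - ln a)) powr al * D)"
    by (rule integral_add) (auto intro!: integrable_continuous_interval continuous_intros c)
  also have "\<dots> = (b - a) * C + (ln b - ln a) * Gfun a b al 1 * D"
    using ab by (simp add: gsub[OF ab al])
  also have "\<dots> = (ln b - ln a) * (C * logmean a b + Gfun a b al 1 * D)"
    using L by (simp add: logmean_def field_simps)
  finally show ?thesis .
qed

theorem theorem3p6:
  fixes f g :: "real \<Rightarrow> real" and a b q \<alpha>1 m1 \<alpha>2 m2 :: real
  assumes f_nonneg: "\<forall>x\<ge>0. f x \<ge> 0" and g_nonneg: "\<forall>x\<ge>0. g x \<ge> 0"
    and ab: "0 < a" "a < b"
    and int: "set_integrable lborel {a..b} (\<lambda>x. f x * g x)"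
    and q: "q > 1"
    and par1: "\<alpha>1 \<in> {0<..1}" "m1 \<in> {0<..1}"
    and par2: "\<alpha>2 \<in> {0<..1}" "m2 \<in> {0<..1}"
    and cf: "GA_convex \<alpha>1 m1 (max (a powr (1 / m1)) b) (\<lambda>x. f x powr q)"
    and cg: "GA_convex \<alpha>2 m2 (max (a powr (1 / m2)) b) (\<lambda>x. g x powr (q / (q - 1)))"
  shows "(LINT x:{a..b}|lborel. f x * g x) \<le>
     (ln b - ln a)
     * (m1 * f (a powr (1 / m1)) powr q * logmean a b
        + Gfun a b \<alpha>1 1 * (f b powr q - m1 * f (a powr (1 / m1)) powr q)) powr (1 / q)
     * (m2 * g (a powr (1 / m2)) powr (q / (q - 1)) * logmean a b
        + Gfun a b \<alpha>2 1 * (g b powr (q / (q - 1)) - m2 * g (a powr (1 / m2)) powr (q / (q - 1)))) powr (1 - 1 / q)"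
proof -
  define L where "L = ln b - ln a"
  have L: "L > 0" using ab by (simp add: L_def)
  define tau where "tau x = (ln x - ln a) / (ln b - ln a)" for x
  define C1 where "C1 = m1 * f (a powr (1 / m1)) powr q"
  define D1 where "D1 = f b powr q - m1 * f (a powr (1 / m1)) powr q"
  define C2 where "C2 = m2 * g (a powr (1 / m2)) powr (q / (q - 1))"
  define D2 where "D2 = g b powr (q / (q - 1)) - m2 * g (a powr (1 / m2)) powr (q / (q - 1))"
  define H1 where "H1 x = C1 + tau x powr \<alpha>1 * D1" for x
  define H2 where "H2 x = C2 + tau x powr \<alpha>2 * D2" for x
  have a1: "\<alpha>1 > 0" "m1 > 0" "m1 \<le> 1" and a2: "\<alpha>2 > 0" "m2 > 0" "m2 \<le> 1" using par1 par2 by auto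
  have p: "q / (q - 1) > 0" using q by simp
  have pf: "f x powr q \<le> H1 x" if "x \<in> {a..b}" for x
    using conv_pt[OF cf ab a1(1) a1(2,3) that] by (simp add: H1_def C1_def D1_def tau_def)
  have pg: "g x powr (q / (q - 1)) \<le> H2 x" if "x \<in> {a..b}" for x
    using conv_pt[OF cg ab a2(1) a2(2,3) that] by (simp add: H2_def C2_def D2_def tau_def)
  have H1n: "H1 x \<ge> 0" if "x \<in> {a..b}" for x using pf[OF that] by (meson order.trans powr_ge_zero)
  have H2n: "H2 x \<ge> 0" if "x \<in> {a..b}" for x using pg[OF that] by (meson order.trans powr_ge_zero)
  have fx: "f x \<le> H1 x powr (1 / q)" if "x \<in> {a..b}" for x
    using that ab f_nonneg q by (intro root_le pf) auto
  have gx: "g x \<le> H2 x powr (1 - 1 / q)" if "x \<in> {a..b}" for x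
  proof -
    have "g x \<le> H2 x powr (1 / (q / (q - 1)))"
      using that ab g_nonneg p by (intro root_le pg) auto
    also have "1 / (q / (q - 1)) = 1 - 1 / q" using q by (simp add: field_simps)
    finally show ?thesis .
  qed
  have ct1: "continuous_on {a..b} (\<lambda>x. tau x powr \<alpha>1)"
    unfolding tau_def using ab a1 by (intro continuous_on_powr' continuous_intros) (auto simp: divide_simps)
  have ct2: "continuous_on {a..b} (\<lambda>x. tau x powr \<alpha>2)"
    unfolding tau_def using ab a2 by (intro continuous_on_powr' continuous_intros) (auto simp: divide_simps)
  have cH1: "continuous_on {a..b} H1" unfolding H1_def by (intro continuous_intros ct1)
  have cH2: "continuous_on {a..b} H2" unfolding H2_def by (intro continuous_intros ct2)
  have cP: "continuous_on {a..b} (\<lambda>x. H1 x powr (1 / q) * H2 x powr (1 - 1 / q))"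
    using q H1n H2n by (intro continuous_intros continuous_on_powr' cH1 cH2) auto
  have "(LINT x:{a..b}|lborel. f x * g x) \<le> (LINT x:{a..b}|lborel. H1 x powr (1 / q) * H2 x powr (1 - 1 / q))"
  proof (rule set_integral_mono[OF int borel_integrable_atLeastAtMost'[OF cP]])
    fix x assume x: "x \<in> {a..b}"
    show "f x * g x \<le> H1 x powr (1 / q) * H2 x powr (1 - 1 / q)"
      using fx[OF x] gx[OF x] x ab f_nonneg g_nonneg by (intro mult_mono) auto
  qed
  also have "\<dots> = integral {a..b} (\<lambda>x. H1 x powr (1 / q) * H2 x powr (1 - 1 / q))"
    by (rule set_borel_integral_eq_integral(2)[OF borel_integrable_atLeastAtMost'[OF cP]])
  also have "\<dots> \<le> (integral {a..b} H1) powr (1 / q) * (integral {a..b} H2) powr (1 - 1 / q)"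
    using q ab H1n H2n by (intro holder cH1 cH2) auto
  also have "integral {a..b} H1 = L * (C1 * logmean a b + Gfun a b \<alpha>1 1 * D1)"
    unfolding H1_def tau_def L_def by (rule int_lin[OF ab a1(1)])
  also have "integral {a..b} H2 = L * (C2 * logmean a b + Gfun a b \<alpha>2 1 * D2)"
    unfolding H2_def tau_def L_def by (rule int_lin[OF ab a2(1)])
  finally have main: "(LINT x:{a..b}|lborel. f x * g x) \<le>
     (L * (C1 * logmean a b + Gfun a b \<alpha>1 1 * D1)) powr (1 / q) *
     (L * (C2 * logmean a b + Gfun a b \<alpha>2 1 * D2)) powr (1 - 1 / q)" .
  have i1: "integral {a..b} H1 \<ge> 0"
    using H1n by (intro integral_nonneg integrable_continuous_interval cH1) auto
  have i2: "integral {a..b} H2 \<ge> 0"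
    using H2n by (intro integral_nonneg integrable_continuous_interval cH2) auto
  have X1: "C1 * logmean a b + Gfun a b \<alpha>1 1 * D1 \<ge> 0"
  proof -
    have "L * (C1 * logmean a b + Gfun a b \<alpha>1 1 * D1) \<ge> 0"
      using i1 unfolding H1_def tau_def L_def using int_lin[OF ab a1(1)] by simp
    then show ?thesis using L by (simp add: zero_le_mult_iff)
  qed
  have X2: "C2 * logmean a b + Gfun a b \<alpha>2 1 * D2 \<ge> 0"
  proof -
    have "L * (C2 * logmean a b + Gfun a b \<alpha>2 1 * D2) \<ge> 0"
      using i2 unfolding H2_def tau_def L_def using int_lin[OF ab a2(1)] by simp
    then show ?thesis using L by (simp add: zero_le_mult_iff)
  qed
  have "(L * (C1 * logmean a b + Gfun a b \<alpha>1 1 * D1)) powr (1 / q) *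
     (L * (C2 * logmean a b + Gfun a b \<alpha>2 1 * D2)) powr (1 - 1 / q)
     = (L powr (1 / q) * L powr (1 - 1 / q)) * (C1 * logmean a b + Gfun a b \<alpha>1 1 * D1) powr (1 / q) *
       (C2 * logmean a b + Gfun a b \<alpha>2 1 * D2) powr (1 - 1 / q)"
    using L X1 X2 by (simp add: powr_mult)
  also have "L powr (1 / q) * L powr (1 - 1 / q) = L"
    using L by (simp add: powr_add[symmetric])
  finally show ?thesis using main by (simp add: L_def C1_def D1_def C2_def D2_def)
qed

end
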